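(* Let $S$ be a nonempty complete lattice and let $F:S\to 2^S$ be a lower V-ascending correspondence such that for every $x\in S$, the value $F(x)$ is nonempty and chain-subcomplete downwards in $S$. Then $F$ has a least fixed point, i.e. the set $\{s\in S:s\in F(s)\}$ is nonempty and has a least element.
   Context: A poset $S$ is a complete lattice if every nonempty subset has a supremum and infimum in $S$. A subset $T\subset S$ is chain-subcomplete downwards in $S$ if for every nonempty chain $C\subset T$, $\inf_S C$ exists and belongs to $T$. A correspondence $F:S\to 2^S$ on a lattice $S$ is lower V-ascending if for all $x<x'$ in $S$ (strict inequality), every $y\in F(x)$ and every $y'\in F(x')$, one has $y\wedge y'\in F(x)$. *)

theory Defs
  imports Main
begin

definition chain_subcomplete_down :: "'a::complete_lattice set \<Rightarrow> bool" where
  "chain_subcomplete_down T \<longleftrightarrow>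
     (\<forall>C. C \<noteq> {} \<longrightarrow> C \<subseteq> T \<longrightarrow> Complete_Partial_Order.chain (\<le>) C \<longrightarrow> Inf C \<in> T)"

definition lower_V_ascending :: "('a::lattice \<Rightarrow> 'a set) \<Rightarrow> bool" where
  "lower_V_ascending F \<longleftrightarrow>
     (\<forall>x x' y y'. x < x' \<longrightarrow> y \<in> F x \<longrightarrow> y' \<in> F x' \<longrightarrow> inf y y' \<in> F x)"

end

theory Submission
  imports Defs
begin

lemma min_exists:
  fixes A :: "'a::complete_lattice set"
  assumes ne: "A \<noteq> {}" and cs: "chain_subcomplete_down A"
  shows "\<exists>m\<in>A. \<forall>a\<in>A. a \<le> m \<longrightarrow> a = m"
proof -
  have po: "partial_order_on A (relation_of (\<lambda>x y. y \<le> x) A)"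
    by (rule partial_order_on_relation_ofI) auto
  have "\<exists>u\<in>A. \<forall>a\<in>C. u \<le> a" if C: "C \<in> Chains (relation_of (\<lambda>x y. y \<le> x) A)" for C
  proof (cases "C = {}")
    case True then show ?thesis using ne by auto
  next
    case False
    have sub: "C \<subseteq> A" using C unfolding Chains_def relation_of_def by auto
    have "Complete_Partial_Order.chain (\<le>) C"
      using C unfolding Chains_def relation_of_def Complete_Partial_Order.chain_def by auto
    then have "Inf C \<in> A" using cs False sub unfolding chain_subcomplete_down_def by blast
    then show ?thesis by (auto intro: Inf_lower)
  qed
  from predicate_Zorn[OF po this] show ?thesis by auto
qed

theorem lemma2p9:
  fixes F :: "'a::complete_lattice \<Rightarrow> 'a set"
  assumes "lower_V_ascending F"
    and "\<And>x. F x \<noteq> {}"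
    and "\<And>x. chain_subcomplete_down (F x)"
  shows "\<exists>s. s \<in> F s \<and> (\<forall>t. t \<in> F t \<longrightarrow> s \<le> t)"
proof -
  define D where "D = {x. \<exists>y\<in>F x. y \<le> x}"
  define m where "m = Inf D"
  have lb: "m \<le> x" if "x \<in> D" for x using that m_def by (simp add: Inf_lower)
  have V: "inf y y' \<in> F x" if "x < x'" "y \<in> F x" "y' \<in> F x'" for x x' y y'
    using assms(1) that unfolding lower_V_ascending_def by blast
  obtain w where w: "w \<in> F m" "w \<le> m"
  proof (cases "m \<in> D")
    case True then show ?thesis using that D_def by auto
  next
    case False
    obtain w where w: "w \<in> F m" and mn: "\<forall>a\<in>F m. a \<le> w \<longrightarrow> a = w"
      using min_exists[OF assms(2) assms(3)] by blast
    have "w \<le> x" if "x \<in> D" for x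
    proof -
      obtain y where y: "y \<in> F x" "y \<le> x" using \<open>x \<in> D\<close> D_def by auto
      have "m < x" using lb[OF that] False that by (auto simp: less_le)
      then have "inf w y \<in> F m" using V w y by blast
      then have "inf w y = w" using mn by auto
      then show ?thesis using y by (metis inf.absorb_iff1 order_trans)
    qed
    then have "w \<le> m" unfolding m_def by (auto intro: Inf_greatest)
    then show ?thesis using that w by auto
  qed
  have "w = m"
  proof (rule ccontr)
    assume "w \<noteq> m"
    then have lt: "w < m" using w by auto
    obtain v where v: "v \<in> F w" using assms(2) by blast
    have "inf v w \<in> F w" using V[OF lt v w(1)] .
    then have "w \<in> D" unfolding D_def using inf.cobounded2 by blast
    then show False using lb lt by fastforce
  qed
  then have "m \<in> F m" using w by simp
  moreover have "m \<le> t" if "t \<in> F t" for t using that lb D_def by auto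
  ultimately show ?thesis by blast
qed

end
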